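(* Let $(b,c)$ be a weighted graph over $X$ and let $m$ be a measure on $X$ with $m(X)<\infty$. Let $\sigma$ be a pseudometric on $X$ which is intrinsic with respect to $m$. (a) If $c\equiv0$, then $\sigma\le\sqrt{m(X)}\,\varrho$ on $X\times X$. (b) If $C:=\sum_{x\in X}c(x)<\infty$ and $\sigma\le S$ on $X\times X$ for some constant $S\ge0$, then $\sigma\le\sqrt{m(X)+CS^2}\,\varrho$ on $X\times X$.
   Context: Let $X$ be a countably infinite set. A weighted graph $(b,c)$ over $X$ consists of a symmetric $b:X\times X\to[0,\infty)$ with $b(x,x)=0$ and $\sum_{y}b(x,y)<\infty$ for all $x$, and $c:X\to[0,\infty)$. For $f:X\to\mathbb C$ let $\widetilde Q(f)=\frac12\sum_{x,y}b(x,y)|f(x)-f(y)|^2+\sum_x c(x)|f(x)|^2\in[0,\infty]$ and $\widetilde D=\{f:\widetilde Q(f)<\infty\}$. Define $\varrho(x,y)=\sup\{|f(x)-f(y)|:f\in\widetilde D,\ \widetilde Q(f)\le1\}\in[0,\infty]$. A measure on $X$ is a function $m:X\to[0,\infty)$, with $m(A)=\sum_{x\in A}m(x)$. A pseudometric $\sigma:X\times X\to[0,\infty)$ is called intrinsic with respect to $m$ if $\frac12\sum_{y\in X}b(x,y)\sigma(x,y)^2\le m(x)$ for every $x\in X$. *)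

theory Defs
  imports "HOL-Analysis.Analysis"
begin

definition weighted_graph :: "('x \<Rightarrow> 'x \<Rightarrow> real) \<Rightarrow> ('x \<Rightarrow> real) \<Rightarrow> bool" where
  "weighted_graph b c \<longleftrightarrow>
     (\<forall>x y. b x y \<ge> 0) \<and> (\<forall>x y. b x y = b y x) \<and> (\<forall>x. b x x = 0) \<and>
     (\<forall>x. (\<lambda>y. b x y) summable_on UNIV) \<and> (\<forall>x. c x \<ge> 0)"

definition Qt :: "('x \<Rightarrow> 'x \<Rightarrow> real) \<Rightarrow> ('x \<Rightarrow> real) \<Rightarrow> ('x \<Rightarrow> complex) \<Rightarrow> ennreal" where
  "Qt b c f =
     ennreal (1/2) * (\<Sum>\<^sub>\<infinity>(x,y)\<in>UNIV. ennreal (b x y * (cmod (f x - f y))\<^sup>2))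
     + (\<Sum>\<^sub>\<infinity>x\<in>UNIV. ennreal (c x * (cmod (f x))\<^sup>2))"

definition Dt :: "('x \<Rightarrow> 'x \<Rightarrow> real) \<Rightarrow> ('x \<Rightarrow> real) \<Rightarrow> ('x \<Rightarrow> complex) set" where
  "Dt b c = {f. Qt b c f < \<infinity>}"

definition rho :: "('x \<Rightarrow> 'x \<Rightarrow> real) \<Rightarrow> ('x \<Rightarrow> real) \<Rightarrow> 'x \<Rightarrow> 'x \<Rightarrow> ennreal" where
  "rho b c x y = (SUP f\<in>{f. f \<in> Dt b c \<and> Qt b c f \<le> 1}. ennreal (cmod (f x - f y)))"

definition pseudometric :: "('x \<Rightarrow> 'x \<Rightarrow> real) \<Rightarrow> bool" where
  "pseudometric \<sigma> \<longleftrightarrow>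
     (\<forall>x y. \<sigma> x y \<ge> 0) \<and> (\<forall>x. \<sigma> x x = 0) \<and> (\<forall>x y. \<sigma> x y = \<sigma> y x) \<and>
     (\<forall>x y z. \<sigma> x z \<le> \<sigma> x y + \<sigma> y z)"

text \<open>Measure: a nonnegative function m; m(A) = sum over A.\<close>
definition measure_on :: "('x \<Rightarrow> real) \<Rightarrow> bool" where
  "measure_on m \<longleftrightarrow> (\<forall>x. m x \<ge> 0)"

definition intrinsic :: "('x \<Rightarrow> 'x \<Rightarrow> real) \<Rightarrow> ('x \<Rightarrow> real) \<Rightarrow> ('x \<Rightarrow> 'x \<Rightarrow> real) \<Rightarrow> bool" where
  "intrinsic b m \<sigma> \<longleftrightarrow>
     (\<forall>x. ennreal (1/2) * (\<Sum>\<^sub>\<infinity>y\<in>UNIV. ennreal (b x y * (\<sigma> x y)\<^sup>2)) \<le> ennreal (m x))"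

end

theory Submission imports Defs begin

lemma enn_sum_le_infsum:
  fixes h :: "'a \<Rightarrow> ennreal"
  assumes "finite F" "F \<subseteq> A"
  shows "sum h F \<le> infsum h A"
  unfolding nonneg_infsum_complete[of A h, OF zero_le]
  by (rule SUP_upper) (use assms in auto)

lemma enn_infsum_le:
  fixes h :: "'a \<Rightarrow> ennreal"
  assumes "\<And>F. finite F \<Longrightarrow> F \<subseteq> A \<Longrightarrow> sum h F \<le> B"
  shows "infsum h A \<le> B"
  unfolding nonneg_infsum_complete[of A h, OF zero_le]
  by (rule SUP_least) (use assms in auto)

lemma enn_infsum_cmult:
  fixes h :: "'a \<Rightarrow> ennreal"
  shows "(\<Sum>\<^sub>\<infinity>x\<in>A. c * h x) = c * infsum h A"
  unfolding nonneg_infsum_complete[of A h, OF zero_le] nonneg_infsum_complete[of A "\<lambda>x. c * h x", OF zero_le]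
  by (simp add: SUP_mult_left_ennreal sum_distrib_left)

lemma enn_infsum_mono:
  fixes h g :: "'a \<Rightarrow> ennreal"
  assumes "\<And>x. x \<in> A \<Longrightarrow> h x \<le> g x"
  shows "infsum h A \<le> infsum g A"
  by (rule infsum_mono) (use assms in \<open>auto intro: nonneg_summable_on_complete\<close>)

lemma enn_infsum_real:
  fixes m :: "'a \<Rightarrow> real"
  assumes "m summable_on A" "\<And>x. x \<in> A \<Longrightarrow> m x \<ge> 0"
  shows "(\<Sum>\<^sub>\<infinity>x\<in>A. ennreal (m x)) = ennreal (infsum m A)"
proof -
  have "ennreal (infsum m A) = (SUP F\<in>{F. finite F \<and> F \<subseteq> A}. (ennreal (sum m F)))"
    by (rule infsum_nonneg_is_SUPREMUM_ennreal) (use assms in auto)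
  also have "\<dots> = (SUP F\<in>{F. finite F \<and> F \<subseteq> A}. (\<Sum>x\<in>F. ennreal (m x)))"
    by (intro SUP_cong refl) (use assms in \<open>auto intro!: sum_ennreal[symmetric]\<close>)
  also have "\<dots> = (\<Sum>\<^sub>\<infinity>x\<in>A. ennreal (m x))"
    by (rule nonneg_infsum_complete[symmetric]) auto
  finally show ?thesis by simp
qed

lemma enn_infsum_pairs:
  fixes g :: "'a \<times> 'b \<Rightarrow> ennreal"
  shows "infsum g UNIV \<le> (\<Sum>\<^sub>\<infinity>u\<in>UNIV. \<Sum>\<^sub>\<infinity>v\<in>UNIV. g (u,v))"
proof (rule enn_infsum_le)
  fix F :: "('a \<times> 'b) set" assume F: "finite F"
  have "sum g F \<le> sum g (fst ` F \<times> snd ` F)"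
    by (rule sum_mono2) (use F in \<open>auto simp: finite_cartesian_product intro: rev_image_eqI\<close>)
  also have "\<dots> = (\<Sum>u\<in>fst ` F. \<Sum>v\<in>snd ` F. g (u,v))"
    by (simp add: sum.cartesian_product split_def)
  also have "\<dots> \<le> (\<Sum>u\<in>fst ` F. \<Sum>\<^sub>\<infinity>v\<in>UNIV. g (u,v))"
    by (intro sum_mono enn_sum_le_infsum) (use F in auto)
  also have "\<dots> \<le> (\<Sum>\<^sub>\<infinity>u\<in>UNIV. \<Sum>\<^sub>\<infinity>v\<in>UNIV. g (u,v))"
    by (intro enn_sum_le_infsum) (use F in auto)
  finally show "sum g F \<le> (\<Sum>\<^sub>\<infinity>u\<in>UNIV. \<Sum>\<^sub>\<infinity>v\<in>UNIV. g (u,v))" .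
qed

lemma key_bound:
  fixes b :: "'x \<Rightarrow> 'x \<Rightarrow> real" and c :: "'x \<Rightarrow> real"
    and m :: "'x \<Rightarrow> real" and \<sigma> :: "'x \<Rightarrow> 'x \<Rightarrow> real"
  assumes wg: "weighted_graph b c"
    and mo: "measure_on m" and ms: "m summable_on UNIV"
    and ps: "pseudometric \<sigma>" and it: "intrinsic b m \<sigma>"
    and cs: "c summable_on UNIV"
    and cS: "\<And>u. c u * (\<sigma> x0 u)\<^sup>2 \<le> c u * S\<^sup>2"
    and t: "t \<ge> 0"
  shows "Qt b c (\<lambda>z. complex_of_real (t * \<sigma> x0 z))
          \<le> ennreal (t\<^sup>2 * ((\<Sum>\<^sub>\<infinity>z\<in>UNIV. m z) + (\<Sum>\<^sub>\<infinity>z\<in>UNIV. c z) * S\<^sup>2))"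
proof -
  let ?f = "\<lambda>z. complex_of_real (t * \<sigma> x0 z)"
  have b0: "\<And>u v. b u v \<ge> 0" and c0: "\<And>u. c u \<ge> 0" using wg unfolding weighted_graph_def by auto
  have m0: "\<And>u. m u \<ge> 0" using mo unfolding measure_on_def by auto
  have s0: "\<And>u v. \<sigma> u v \<ge> 0" and ssym: "\<And>u v. \<sigma> u v = \<sigma> v u"
    and stri: "\<And>x y z. \<sigma> x z \<le> \<sigma> x y + \<sigma> y z" using ps unfolding pseudometric_def by auto
  have M0: "(\<Sum>\<^sub>\<infinity>z\<in>UNIV. m z) \<ge> 0" by (rule infsum_nonneg) (use m0 in auto)
  have C0: "(\<Sum>\<^sub>\<infinity>z\<in>UNIV. c z) \<ge> 0" by (rule infsum_nonneg) (use c0 in auto)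
  have lip: "\<bar>\<sigma> x0 u - \<sigma> x0 v\<bar> \<le> \<sigma> u v" for u v
    using stri[of x0 u v] stri[of x0 v u] ssym[of u v] by auto
  have term1: "(\<Sum>\<^sub>\<infinity>(u,v)\<in>UNIV. ennreal (b u v * (cmod (?f u - ?f v))\<^sup>2))
      \<le> ennreal (t\<^sup>2) * (\<Sum>\<^sub>\<infinity>u\<in>UNIV. \<Sum>\<^sub>\<infinity>v\<in>UNIV. ennreal (b u v * (\<sigma> u v)\<^sup>2))"
  proof -
    have "(\<Sum>\<^sub>\<infinity>(u,v)\<in>UNIV. ennreal (b u v * (cmod (?f u - ?f v))\<^sup>2))
        \<le> (\<Sum>\<^sub>\<infinity>(u,v)\<in>UNIV. ennreal (t\<^sup>2) * ennreal (b u v * (\<sigma> u v)\<^sup>2))"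
    proof -
     have *: "ennreal (b u v * (cmod (?f u - ?f v))\<^sup>2) \<le> ennreal (t\<^sup>2) * ennreal (b u v * (\<sigma> u v)\<^sup>2)" for u v
     proof -
      have "cmod (?f u - ?f v) = t * \<bar>\<sigma> x0 u - \<sigma> x0 v\<bar>"
        using t by (simp flip: of_real_diff right_diff_distrib add: abs_mult norm_mult)
      hence "(cmod (?f u - ?f v))\<^sup>2 \<le> t\<^sup>2 * (\<sigma> u v)\<^sup>2"
      proof -
        have "\<bar>\<sigma> x0 u - \<sigma> x0 v\<bar>\<^sup>2 \<le> (\<sigma> u v)\<^sup>2"
          using lip[of u v] by (intro power_mono) auto
        hence "t\<^sup>2 * \<bar>\<sigma> x0 u - \<sigma> x0 v\<bar>\<^sup>2 \<le> t\<^sup>2 * (\<sigma> u v)\<^sup>2"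
          by (intro mult_left_mono) auto
        thus ?thesis using \<open>cmod (?f u - ?f v) = t * \<bar>\<sigma> x0 u - \<sigma> x0 v\<bar>\<close>
          by (simp add: power_mult_distrib)
      qed
      hence "b u v * (cmod (?f u - ?f v))\<^sup>2 \<le> t\<^sup>2 * (b u v * (\<sigma> u v)\<^sup>2)"
        using b0[of u v] by (metis mult.left_commute mult_left_mono)
      thus "ennreal (b u v * (cmod (?f u - ?f v))\<^sup>2) \<le> ennreal (t\<^sup>2) * ennreal (b u v * (\<sigma> u v)\<^sup>2)"
        by (simp add: ennreal_mult[symmetric] ennreal_leI b0)
     qed
     show ?thesis by (rule enn_infsum_mono) (use * in \<open>auto simp del: of_real_mult split: prod.splits\<close>)
    qed
    also have "\<dots> = ennreal (t\<^sup>2) * (\<Sum>\<^sub>\<infinity>(u,v)\<in>UNIV. ennreal (b u v * (\<sigma> u v)\<^sup>2))"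
      using enn_infsum_cmult[of "ennreal (t\<^sup>2)" "\<lambda>(u,v). ennreal (b u v * (\<sigma> u v)\<^sup>2)" UNIV]
      by (simp add: case_prod_beta')
    also have "\<dots> \<le> ennreal (t\<^sup>2) * (\<Sum>\<^sub>\<infinity>u\<in>UNIV. \<Sum>\<^sub>\<infinity>v\<in>UNIV. ennreal (b u v * (\<sigma> u v)\<^sup>2))"
      using enn_infsum_pairs[of "\<lambda>(u,v). ennreal (b u v * (\<sigma> u v)\<^sup>2)"]
      by (intro mult_left_mono) auto
    finally show ?thesis .
  qed
  have iter: "ennreal (1/2) * (\<Sum>\<^sub>\<infinity>u\<in>UNIV. \<Sum>\<^sub>\<infinity>v\<in>UNIV. ennreal (b u v * (\<sigma> u v)\<^sup>2))
        \<le> ennreal (\<Sum>\<^sub>\<infinity>z\<in>UNIV. m z)"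
  proof -
    have "ennreal (1/2) * (\<Sum>\<^sub>\<infinity>u\<in>UNIV. \<Sum>\<^sub>\<infinity>v\<in>UNIV. ennreal (b u v * (\<sigma> u v)\<^sup>2))
        = (\<Sum>\<^sub>\<infinity>u\<in>UNIV. ennreal (1/2) * (\<Sum>\<^sub>\<infinity>v\<in>UNIV. ennreal (b u v * (\<sigma> u v)\<^sup>2)))"
      by (rule enn_infsum_cmult[symmetric])
    also have "\<dots> \<le> (\<Sum>\<^sub>\<infinity>u\<in>UNIV. ennreal (m u))"
      by (rule enn_infsum_mono) (use it in \<open>auto simp: intrinsic_def\<close>)
    also have "\<dots> = ennreal (\<Sum>\<^sub>\<infinity>z\<in>UNIV. m z)"
      by (rule enn_infsum_real) (use ms m0 in auto)
    finally show ?thesis .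
  qed
  have term2: "(\<Sum>\<^sub>\<infinity>x\<in>UNIV. ennreal (c x * (cmod (?f x))\<^sup>2))
      \<le> ennreal (t\<^sup>2) * ennreal ((\<Sum>\<^sub>\<infinity>z\<in>UNIV. c z) * S\<^sup>2)"
  proof -
    have "(\<Sum>\<^sub>\<infinity>x\<in>UNIV. ennreal (c x * (cmod (?f x))\<^sup>2))
        \<le> (\<Sum>\<^sub>\<infinity>x\<in>UNIV. ennreal (t\<^sup>2) * ennreal (c x * S\<^sup>2))"
    proof (rule enn_infsum_mono)
      fix u :: 'x
      have "cmod (?f u) = \<bar>t * \<sigma> x0 u\<bar>" by (simp only: norm_of_real)
      hence "c u * (cmod (?f u))\<^sup>2 = t\<^sup>2 * (c u * (\<sigma> x0 u)\<^sup>2)"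
        by (simp add: power_mult_distrib)
      also have "\<dots> \<le> t\<^sup>2 * (c u * S\<^sup>2)" using cS[of u] by (simp add: mult_left_mono)
      finally show "ennreal (c u * (cmod (?f u))\<^sup>2) \<le> ennreal (t\<^sup>2) * ennreal (c u * S\<^sup>2)"
        by (simp add: ennreal_mult[symmetric] ennreal_leI c0)
    qed
    also have "\<dots> = ennreal (t\<^sup>2) * (\<Sum>\<^sub>\<infinity>x\<in>UNIV. ennreal (c x * S\<^sup>2))"
      by (rule enn_infsum_cmult)
    also have "(\<Sum>\<^sub>\<infinity>x\<in>UNIV. ennreal (c x * S\<^sup>2)) = ennreal (\<Sum>\<^sub>\<infinity>x\<in>UNIV. c x * S\<^sup>2)"
      by (rule enn_infsum_real) (use cs c0 in \<open>auto intro: summable_on_cmult_left\<close>)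
    also have "(\<Sum>\<^sub>\<infinity>x\<in>UNIV. c x * S\<^sup>2) = (\<Sum>\<^sub>\<infinity>z\<in>UNIV. c z) * S\<^sup>2"
      by (rule infsum_cmult_left) (use cs in auto)
    finally show ?thesis .
  qed
  have "Qt b c ?f \<le> ennreal (1/2) * (ennreal (t\<^sup>2) * (\<Sum>\<^sub>\<infinity>u\<in>UNIV. \<Sum>\<^sub>\<infinity>v\<in>UNIV. ennreal (b u v * (\<sigma> u v)\<^sup>2)))
      + ennreal (t\<^sup>2) * ennreal ((\<Sum>\<^sub>\<infinity>z\<in>UNIV. c z) * S\<^sup>2)"
    unfolding Qt_def by (intro add_mono mult_left_mono term1 term2) auto
  also have "\<dots> = ennreal (t\<^sup>2) * (ennreal (1/2) * (\<Sum>\<^sub>\<infinity>u\<in>UNIV. \<Sum>\<^sub>\<infinity>v\<in>UNIV. ennreal (b u v * (\<sigma> u v)\<^sup>2)))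
      + ennreal (t\<^sup>2) * ennreal ((\<Sum>\<^sub>\<infinity>z\<in>UNIV. c z) * S\<^sup>2)"
    by (simp add: mult.left_commute)
  also have "\<dots> \<le> ennreal (t\<^sup>2) * ennreal (\<Sum>\<^sub>\<infinity>z\<in>UNIV. m z)
      + ennreal (t\<^sup>2) * ennreal ((\<Sum>\<^sub>\<infinity>z\<in>UNIV. c z) * S\<^sup>2)"
    by (intro add_mono mult_left_mono iter) auto
  also have "\<dots> = ennreal (t\<^sup>2 * ((\<Sum>\<^sub>\<infinity>z\<in>UNIV. m z) + (\<Sum>\<^sub>\<infinity>z\<in>UNIV. c z) * S\<^sup>2))"
  proof -
    have K0: "(\<Sum>\<^sub>\<infinity>z\<in>UNIV. c z) * S\<^sup>2 \<ge> 0" using C0 by simp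
    have "ennreal (t\<^sup>2 * ((\<Sum>\<^sub>\<infinity>z\<in>UNIV. m z) + (\<Sum>\<^sub>\<infinity>z\<in>UNIV. c z) * S\<^sup>2))
       = ennreal (t\<^sup>2) * (ennreal (\<Sum>\<^sub>\<infinity>z\<in>UNIV. m z) + ennreal ((\<Sum>\<^sub>\<infinity>z\<in>UNIV. c z) * S\<^sup>2))"
      using M0 K0 by (simp only: ennreal_mult ennreal_plus zero_le_power2 add_nonneg_nonneg)
    thus ?thesis by (simp only: distrib_left)
  qed
  finally show ?thesis .
qed

lemma general:
  fixes b :: "'x \<Rightarrow> 'x \<Rightarrow> real" and c :: "'x \<Rightarrow> real"
    and m :: "'x \<Rightarrow> real" and \<sigma> :: "'x \<Rightarrow> 'x \<Rightarrow> real"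
  assumes wg: "weighted_graph b c"
    and mo: "measure_on m" and ms: "m summable_on UNIV"
    and ps: "pseudometric \<sigma>" and it: "intrinsic b m \<sigma>"
    and cs: "c summable_on UNIV"
    and cS: "\<And>x0 u. c u * (\<sigma> x0 u)\<^sup>2 \<le> c u * S\<^sup>2"
  shows "rho b c x y = \<infinity> \<or>
     ennreal (\<sigma> x y) \<le> ennreal (sqrt ((\<Sum>\<^sub>\<infinity>z\<in>UNIV. m z) + (\<Sum>\<^sub>\<infinity>z\<in>UNIV. c z) * S\<^sup>2)) * rho b c x y"
proof -
  define K where "K = (\<Sum>\<^sub>\<infinity>z\<in>UNIV. m z) + (\<Sum>\<^sub>\<infinity>z\<in>UNIV. c z) * S\<^sup>2"
  have c0: "\<And>u. c u \<ge> 0" using wg unfolding weighted_graph_def by auto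
  have m0: "\<And>u. m u \<ge> 0" using mo unfolding measure_on_def by auto
  have M0: "(\<Sum>\<^sub>\<infinity>z\<in>UNIV. m z) \<ge> 0" by (rule infsum_nonneg) (use m0 in auto)
  have C0: "(\<Sum>\<^sub>\<infinity>z\<in>UNIV. c z) \<ge> 0" by (rule infsum_nonneg) (use c0 in auto)
  have K0: "K \<ge> 0" unfolding K_def using M0 C0 by simp
  have s0: "\<sigma> x y \<ge> 0" and sxx: "\<sigma> x x = 0" using ps unfolding pseudometric_def by auto
  have low: "ennreal (t * \<sigma> x y) \<le> rho b c x y" if t: "t \<ge> 0" and tK: "t\<^sup>2 * K \<le> 1" for t
  proof -
    let ?f = "\<lambda>z. complex_of_real (t * \<sigma> x z)"
    have "Qt b c ?f \<le> ennreal (t\<^sup>2 * K)"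
      unfolding K_def by (rule key_bound[OF wg mo ms ps it cs cS t])
    also have "\<dots> \<le> 1" using tK by (simp add: ennreal_leI)
    finally have Q: "Qt b c ?f \<le> 1" .
    hence "?f \<in> Dt b c" unfolding Dt_def using ennreal_one_less_top by (auto intro: le_less_trans)
    with Q have "ennreal (cmod (?f x - ?f y)) \<le> rho b c x y"
      unfolding rho_def by (intro SUP_upper) auto
    moreover have "cmod (?f x - ?f y) = t * \<sigma> x y"
      using sxx s0 t by (simp del: of_real_mult add: norm_minus_commute)
    ultimately show ?thesis by simp
  qed
  show ?thesis
  proof (cases "\<sigma> x y = 0")
    case True then show ?thesis by simp
  next
    case sne: False
    hence spos: "\<sigma> x y > 0" using s0 by simp
    show ?thesis
    proof (cases "K = 0")
      case True
      have "rho b c x y = \<infinity>"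
      proof (rule ccontr)
        assume "rho b c x y \<noteq> \<infinity>"
        then obtain r where r: "rho b c x y = ennreal r" "r \<ge> 0"
          by (cases "rho b c x y") auto
        have "ennreal (((r+1)/\<sigma> x y) * \<sigma> x y) \<le> rho b c x y"
          by (rule low) (use True r spos in auto)
        hence "ennreal (r+1) \<le> ennreal r" using spos r by simp
        thus False using r by (simp add: ennreal_le_iff)
      qed
      thus ?thesis by simp
    next
      case False
      hence Kp: "K > 0" using K0 by simp
      have "ennreal ((1 / sqrt K) * \<sigma> x y) \<le> rho b c x y"
        by (rule low) (use Kp in \<open>auto simp: power_divide\<close>)
      hence "ennreal (sqrt K) * ennreal ((1 / sqrt K) * \<sigma> x y) \<le> ennreal (sqrt K) * rho b c x y"
        by (rule mult_left_mono) auto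
      moreover have "ennreal (sqrt K) * ennreal ((1 / sqrt K) * \<sigma> x y) = ennreal (\<sigma> x y)"
        using Kp s0 by (simp add: ennreal_mult[symmetric])
      ultimately show ?thesis unfolding K_def[symmetric] by simp
    qed
  qed
qed

theorem mainTheorem3:
  fixes b :: "'x \<Rightarrow> 'x \<Rightarrow> real" and c :: "'x \<Rightarrow> real"
    and m :: "'x \<Rightarrow> real" and \<sigma> :: "'x \<Rightarrow> 'x \<Rightarrow> real"
  assumes "countable (UNIV :: 'x set)" and "infinite (UNIV :: 'x set)"
    and "weighted_graph b c"
    and "measure_on m" and "m summable_on UNIV"
    and "pseudometric \<sigma>" and "intrinsic b m \<sigma>"
  shows "((\<forall>x. c x = 0) \<longrightarrow>
            (\<forall>x y. rho b c x y = \<infinity> \<or>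
                   ennreal (\<sigma> x y) \<le> ennreal (sqrt (\<Sum>\<^sub>\<infinity>z\<in>UNIV. m z)) * rho b c x y))
       \<and> (\<forall>S::real. c summable_on UNIV \<longrightarrow> S \<ge> 0 \<longrightarrow> (\<forall>x y. \<sigma> x y \<le> S) \<longrightarrow>
            (\<forall>x y. rho b c x y = \<infinity> \<or>
                   ennreal (\<sigma> x y) \<le>
                     ennreal (sqrt ((\<Sum>\<^sub>\<infinity>z\<in>UNIV. m z) + (\<Sum>\<^sub>\<infinity>z\<in>UNIV. c z) * S\<^sup>2)) * rho b c x y))"
proof (intro conjI allI impI)
  fix x y assume c0: "\<forall>x. c x = 0"
  have "c = (\<lambda>_. 0)" using c0 by auto
  hence cs: "c summable_on UNIV" by simp
  have "rho b c x y = \<infinity> \<or>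
     ennreal (\<sigma> x y) \<le> ennreal (sqrt ((\<Sum>\<^sub>\<infinity>z\<in>UNIV. m z) + (\<Sum>\<^sub>\<infinity>z\<in>UNIV. c z) * 0\<^sup>2)) * rho b c x y"
    by (rule general[OF assms(3-7) cs]) (use c0 in simp)
  thus "rho b c x y = \<infinity> \<or>
     ennreal (\<sigma> x y) \<le> ennreal (sqrt (\<Sum>\<^sub>\<infinity>z\<in>UNIV. m z)) * rho b c x y" by simp
next
  fix S :: real and x y
  assume cs: "c summable_on UNIV" and S0: "S \<ge> 0" and sS: "\<forall>x y. \<sigma> x y \<le> S"
  have c0: "\<And>u. c u \<ge> 0" using assms(3) unfolding weighted_graph_def by auto
  have s0: "\<And>u v. \<sigma> u v \<ge> 0" using assms(6) unfolding pseudometric_def by auto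
  show "rho b c x y = \<infinity> \<or>
     ennreal (\<sigma> x y) \<le> ennreal (sqrt ((\<Sum>\<^sub>\<infinity>z\<in>UNIV. m z) + (\<Sum>\<^sub>\<infinity>z\<in>UNIV. c z) * S\<^sup>2)) * rho b c x y"
  proof (rule general[OF assms(3-7) cs])
    fix x0 u
    have "(\<sigma> x0 u)\<^sup>2 \<le> S\<^sup>2" using sS s0[of x0 u] by (intro power_mono) auto
    thus "c u * (\<sigma> x0 u)\<^sup>2 \<le> c u * S\<^sup>2" using c0[of u] by (rule mult_left_mono)
  qed
qed

end
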